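(* For every $T$, every sequence of outcomes $\mathbf x\in\{0,1\}^T$, every sequence of forecasts $\mathbf p\in[0,1]^T$, and every agent with a finite action set $\mathcal A$ and utility $u:\mathcal A\times\{0,1\}\to[-1,1]$, we have $\mathrm{AgentReg}_u(\mathbf p,\mathbf x)\le 4\,\mathrm{Cal}(\mathbf p,\mathbf x)$. In particular, if $\mathrm{Cal}(\mathbf p,\mathbf x)=o(T)$ then $\mathrm{AgentReg}_u(\mathbf p,\mathbf x)=o(T)$ for every such agent.
   Context: For $\mathbf x=(x_1,\dots,x_T)\in\{0,1\}^T$ and $\mathbf p=(p_1,\dots,p_T)\in[0,1]^T$, let $\beta=\frac1T\sum_t x_t$. For $p\in[0,1]$ let $n_p=|\{t:p_t=p\}|$ and $m_p=|\{t:p_t=p,\ x_t=1\}|$; the calibration error is $\mathrm{Cal}(\mathbf p,\mathbf x)=\sum_{p} |p\,n_p-m_p|$, the sum over the finitely many $p$ with $n_p>0$. An agent responds to forecast $p$ with an action $a(p)\in\arg\max_{a\in\mathcal A}\mathbb E_{x\sim\mathrm{Ber}(p)}[u(a,x)]$ (fixed tie-breaking), and $\mathrm{AgentReg}_u(\mathbf p,\mathbf x)=\sum_{t=1}^T u(a(\beta),x_t)-\sum_{t=1}^T u(a(p_t),x_t)$. *)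

theory Defs
  imports Complex_Main
begin

text \<open>Outcomes x t \<in> {0,1} and forecasts p t \<in> [0,1] for t < T (time steps indexed 0..T-1).\<close>

definition base_rate :: "nat \<Rightarrow> (nat \<Rightarrow> real) \<Rightarrow> real" where
  "base_rate T x = (\<Sum>t<T. x t) / real T"

definition cal_err :: "nat \<Rightarrow> (nat \<Rightarrow> real) \<Rightarrow> (nat \<Rightarrow> real) \<Rightarrow> real" where
  "cal_err T p x = (\<Sum>q \<in> p ` {..<T}.
      \<bar>q * real (card {t. t < T \<and> p t = q}) - real (card {t. t < T \<and> p t = q \<and> x t = 1})\<bar>)"

definition exp_util :: "('a \<Rightarrow> real \<Rightarrow> real) \<Rightarrow> 'a \<Rightarrow> real \<Rightarrow> real" where
  "exp_util u a q = (1 - q) * u a 0 + q * u a 1"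

definition best_response :: "'a set \<Rightarrow> ('a \<Rightarrow> real \<Rightarrow> real) \<Rightarrow> (real \<Rightarrow> 'a) \<Rightarrow> bool" where
  "best_response A u resp \<longleftrightarrow>
     (\<forall>q\<in>{0..1}. resp q \<in> A \<and> (\<forall>b\<in>A. exp_util u b q \<le> exp_util u (resp q) q))"

definition agent_reg :: "('a \<Rightarrow> real \<Rightarrow> real) \<Rightarrow> (real \<Rightarrow> 'a) \<Rightarrow> nat \<Rightarrow> (nat \<Rightarrow> real) \<Rightarrow> (nat \<Rightarrow> real) \<Rightarrow> real" where
  "agent_reg u resp T p x =
     (\<Sum>t<T. u (resp (base_rate T x)) (x t)) - (\<Sum>t<T. u (resp (p t)) (x t))"

end

theory Submission
  imports Defs
begin

lemma group_sum:
  fixes x :: "nat \<Rightarrow> real"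
  assumes "finite S" "\<forall>t\<in>S. x t \<in> {0, 1}"
  shows "(\<Sum>t\<in>S. f (x t)) = real (card S) * f 0 + (f 1 - f 0) * real (card {t\<in>S. x t = 1})"
proof -
  have "(\<Sum>t\<in>S. f (x t)) = (\<Sum>t\<in>S. f 0 + (f 1 - f 0) * (if x t = 1 then 1 else 0))"
    using assms(2) by (intro sum.cong) auto
  also have "\<dots> = real (card S) * f 0 + (f 1 - f 0) * (\<Sum>t\<in>S. (if x t = 1 then 1 else 0))"
    by (simp add: sum.distrib sum_distrib_left)
  also have "(\<Sum>t\<in>S. (if x t = 1 then 1 else 0::real)) = real (card {t\<in>S. x t = 1})"
    using assms(1) by (simp add: sum.inter_filter[symmetric])
  finally show ?thesis .
qed

theorem theorem3p3:
  fixes T :: nat and x p :: "nat \<Rightarrow> real"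
    and A :: "'a set" and u :: "'a \<Rightarrow> real \<Rightarrow> real" and resp :: "real \<Rightarrow> 'a"
  assumes "\<forall>t<T. x t \<in> {0, 1}"
    and "\<forall>t<T. p t \<in> {0..1}"
    and "finite A" and "A \<noteq> {}"
    and "\<forall>a\<in>A. \<forall>y\<in>{0, 1}. \<bar>u a y\<bar> \<le> 1"
    and "best_response A u resp"
  shows "agent_reg u resp T p x \<le> 4 * cal_err T p x"
proof -
  define b where "b = resp (base_rate T x)"
  have br: "base_rate T x \<in> {0..1}"
  proof (cases "T = 0")
    case True thus ?thesis by (simp add: base_rate_def)
  next
    case False
    have "(\<Sum>t<T. x t) \<ge> 0" using assms(1) by (intro sum_nonneg) auto
    moreover have "(\<Sum>t<T. x t) \<le> (\<Sum>t<T. 1)" using assms(1) by (intro sum_mono) auto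
    ultimately show ?thesis using False by (simp add: base_rate_def divide_simps)
  qed
  have bA: "b \<in> A" using assms(6) br unfolding best_response_def b_def by blast
  define S where "S q = {t. t < T \<and> p t = q}" for q
  define n where "n q = real (card (S q))" for q
  define m where "m q = real (card {t. t < T \<and> p t = q \<and> x t = 1})" for q
  have key: "(\<Sum>t\<in>S q. u b (x t) - u (resp (p t)) (x t)) \<le> 4 * \<bar>q * n q - m q\<bar>"
    if q: "q \<in> p ` {..<T}" for q
  proof -
    define a where "a = resp q"
    have q01: "q \<in> {0..1}" using q assms(2) by auto
    have aA: "a \<in> A" using assms(6) q01 unfolding best_response_def a_def by blast
    have fin: "finite (S q)" by (simp add: S_def)
    have xs: "\<forall>t\<in>S q. x t \<in> {0,1}" using assms(1) by (auto simp: S_def)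
    have "(\<Sum>t\<in>S q. u b (x t) - u (resp (p t)) (x t)) = (\<Sum>t\<in>S q. u b (x t)) - (\<Sum>t\<in>S q. u a (x t))"
      by (simp add: sum_subtractf a_def S_def)
    also have "\<dots> = (n q * u b 0 + (u b 1 - u b 0) * m q) - (n q * u a 0 + (u a 1 - u a 0) * m q)"
      using group_sum[OF fin xs, of "u b"] group_sum[OF fin xs, of "u a"]
      by (simp add: n_def m_def S_def conj_assoc)
    finally have eq: "(\<Sum>t\<in>S q. u b (x t) - u (resp (p t)) (x t)) =
        n q * (exp_util u b q - exp_util u a q) + (m q - q * n q) * ((u b 1 - u b 0) - (u a 1 - u a 0))"
      by (simp add: exp_util_def algebra_simps)
    have le: "exp_util u b q \<le> exp_util u a q"
      using assms(6) q01 bA unfolding best_response_def a_def by blast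
    have n0: "n q \<ge> 0" by (simp add: n_def)
    have bnd: "\<bar>(u b 1 - u b 0) - (u a 1 - u a 0)\<bar> \<le> 4"
    proof -
      have "\<bar>u b 1\<bar> \<le> 1" "\<bar>u b 0\<bar> \<le> 1" "\<bar>u a 1\<bar> \<le> 1" "\<bar>u a 0\<bar> \<le> 1"
        using assms(5) aA bA by auto
      thus ?thesis by linarith
    qed
    have "(m q - q * n q) * ((u b 1 - u b 0) - (u a 1 - u a 0)) \<le> \<bar>m q - q * n q\<bar> * 4"
    proof -
      have "(m q - q * n q) * ((u b 1 - u b 0) - (u a 1 - u a 0)) \<le> \<bar>(m q - q * n q) * ((u b 1 - u b 0) - (u a 1 - u a 0))\<bar>"
        by (rule abs_ge_self)
      also have "\<dots> = \<bar>m q - q * n q\<bar> * \<bar>(u b 1 - u b 0) - (u a 1 - u a 0)\<bar>" by (rule abs_mult)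
      also have "\<dots> \<le> \<bar>m q - q * n q\<bar> * 4" by (rule mult_left_mono[OF bnd]) simp
      finally show ?thesis .
    qed
    moreover have "n q * (exp_util u b q - exp_util u a q) \<le> 0"
      using n0 le by (simp add: mult_nonneg_nonpos)
    ultimately show ?thesis unfolding eq by (simp add: abs_minus_commute)
  qed
  have "agent_reg u resp T p x = (\<Sum>t<T. u b (x t) - u (resp (p t)) (x t))"
    by (simp add: agent_reg_def b_def sum_subtractf)
  also have "\<dots> = (\<Sum>q\<in>p ` {..<T}. \<Sum>t\<in>{t\<in>{..<T}. p t = q}. u b (x t) - u (resp (p t)) (x t))"
    by (rule sum.image_gen) simp
  also have "\<dots> = (\<Sum>q\<in>p ` {..<T}. \<Sum>t\<in>S q. u b (x t) - u (resp (p t)) (x t))"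
    by (simp add: S_def)
  also have "\<dots> \<le> (\<Sum>q\<in>p ` {..<T}. 4 * \<bar>q * n q - m q\<bar>)"
    by (rule sum_mono) (rule key)
  also have "\<dots> = 4 * cal_err T p x"
    by (simp add: cal_err_def sum_distrib_left n_def m_def S_def)
  finally show ?thesis .
qed

end
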